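(* Suppose $m$ satisfies (H1) and one of (H2a), (H2b), (H2c). Then: (i) if (H2a) holds and (Osg) holds, then $\beta\le1$, $\beta_1=0$ and $\beta_2=-1$; (ii) if (H2b) holds, then (Osg) fails; (iii) if (H2c) holds, then (Osg) holds.
   Context: $m:(0,\infty)\to\mathbb{R}$. (H1) (for some $n\in\mathbb{N}^\star$): $m\in C^{n+4}(\mathbb{R}_+)$; $m>0$, $m'\ge0$ on $(0,\infty)$; $\lim_{r\to0^+}rm'(r)$ exists; $|\frac{\mathrm d^k}{\mathrm dr^k}m'(r)|\le Cr^{-k}m'(r)$ for $k=1,\dots,n+3$, $r>0$. (H2a): with $\widetilde m(r)=m(e^r)$, there exist $\beta\in[0,+\infty]$, $\beta_1\in[0,\infty)$, $\beta_2\in(-2,\infty)$ with $\lim_{r\to\infty}m(r)=\infty$, $\lim\frac{r(\log r)\widetilde m'(r)}{\widetilde m(r)}=\beta$, $\lim\frac{r\widetilde m'(r)}{\widetilde m(r)}=\beta_1$, $\lim\frac{r\widetilde m''(r)}{\widetilde m'(r)}=\beta_2$ (limits as $r\to\infty$). (H2b): there is $\alpha\in(0,2)$ with $\lim_{r\to\infty}\frac{rm'(r)}{m(r)}=\alpha$. (H2c): there is $C>0$ with $\lim_{r\to\infty}m(r)=C<\infty$. (Osg): $\int_2^\infty\frac{\mathrm dr}{r(\log r)m(r)}=+\infty$. *)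

theory Defs
  imports "HOL-Analysis.Analysis"
begin

definition C_k_on :: "nat \<Rightarrow> real set \<Rightarrow> (real \<Rightarrow> real) \<Rightarrow> bool" where
  "C_k_on k S f \<longleftrightarrow>
     (\<forall>j<k. \<forall>x\<in>S. ((deriv ^^ j) f) differentiable (at x)) \<and>
     (\<forall>j\<le>k. continuous_on S ((deriv ^^ j) f))"

definition H1 :: "nat \<Rightarrow> (real \<Rightarrow> real) \<Rightarrow> bool" where
  "H1 n m \<longleftrightarrow>
     C_k_on (n + 4) {0<..} m \<and>
     (\<forall>r>0. m r > 0 \<and> deriv m r \<ge> 0) \<and>
     (\<exists>L. ((\<lambda>r. r * deriv m r) \<longlongrightarrow> L) (at_right 0)) \<and>
     (\<exists>C. \<forall>k\<in>{1..n+3}. \<forall>r>0.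
        \<bar>(deriv ^^ (k + 1)) m r\<bar> \<le> C * r powr (- real k) * deriv m r)"

definition mtilde :: "(real \<Rightarrow> real) \<Rightarrow> real \<Rightarrow> real" where
  "mtilde m r = m (exp r)"

definition H2a :: "(real \<Rightarrow> real) \<Rightarrow> ereal \<Rightarrow> real \<Rightarrow> real \<Rightarrow> bool" where
  "H2a m \<beta> \<beta>1 \<beta>2 \<longleftrightarrow>
     0 \<le> \<beta> \<and> 0 \<le> \<beta>1 \<and> -2 < \<beta>2 \<and>
     filterlim m at_top at_top \<and>
     ((\<lambda>r. ereal (r * ln r * deriv (mtilde m) r / mtilde m r)) \<longlongrightarrow> \<beta>) at_top \<and>
     ((\<lambda>r. r * deriv (mtilde m) r / mtilde m r) \<longlongrightarrow> \<beta>1) at_top \<and>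
     ((\<lambda>r. r * deriv (deriv (mtilde m)) r / deriv (mtilde m) r) \<longlongrightarrow> \<beta>2) at_top"

definition H2b :: "(real \<Rightarrow> real) \<Rightarrow> bool" where
  "H2b m \<longleftrightarrow> (\<exists>\<alpha>. 0 < \<alpha> \<and> \<alpha> < 2 \<and>
     ((\<lambda>r. r * deriv m r / m r) \<longlongrightarrow> \<alpha>) at_top)"

definition H2c :: "(real \<Rightarrow> real) \<Rightarrow> bool" where
  "H2c m \<longleftrightarrow> (\<exists>C>0. (m \<longlongrightarrow> C) at_top)"

definition Osg :: "(real \<Rightarrow> real) \<Rightarrow> bool" where
  "Osg m \<longleftrightarrow> (\<integral>\<^sup>+ r\<in>{2..}. ennreal (1 / (r * ln r * m r)) \<partial>lborel) = \<infinity>"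

end

theory Submission
  imports Defs
begin

lemma osg_fin:
  fixes m G g :: "real \<Rightarrow> real"
  assumes mpos: "\<And>x. x > 0 \<Longrightarrow> m x > 0"
    and mmono: "\<And>x y. 0 < x \<Longrightarrow> x \<le> y \<Longrightarrow> m x \<le> m y"
    and R: "R \<ge> 2"
    and G: "\<And>r. r \<ge> R \<Longrightarrow> (G has_real_derivative g r) (at r)"
    and gc: "continuous_on {R..} g"
    and fg: "\<And>r. r \<ge> R \<Longrightarrow> 1 / (r * ln r * m r) \<le> g r"
    and GB: "\<And>r. r \<ge> R \<Longrightarrow> G r \<le> B"
  shows "\<not> Osg m"
proof -
  define g2 where "g2 x = g (max R x)" for x
  have g2c: "continuous_on UNIV g2" unfolding g2_def
    by (rule continuous_on_compose2[OF gc]) (auto intro!: continuous_intros)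
  have fpos: "0 < 1 / (r * ln r * m r)" if "r \<ge> 2" for r
    using that mpos[of r] by (intro divide_pos_pos mult_pos_pos) auto
  have gpos: "0 \<le> g r" if "r \<ge> R" for r
    using fg[OF that] fpos[of r] that R by linarith
  define G2 where "G2 x = G (max R x)" for x
  have G2mono: "G2 x \<le> G2 y" if "x \<le> y" for x y
    unfolding G2_def
    by (rule DERIV_nonneg_imp_nondecreasing) (use that G gpos in \<open>auto\<close>)
  have G2B: "G2 x \<le> B" for x unfolding G2_def using GB by auto
  define T where "T = Sup (range G2)"
  have bdd: "bdd_above (range G2)" by (intro bdd_aboveI[of _ B]) (use G2B in auto)
  have G2T: "(G2 \<longlongrightarrow> T) at_top"
  proof (rule order_tendstoI)
    fix a assume "a < T"
    then obtain x where "a < G2 x" unfolding T_def using less_cSup_iff[of "range G2" a] bdd by auto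
    then show "eventually (\<lambda>y. a < G2 y) at_top"
      using G2mono by (intro eventually_at_top_linorderI[of x]) (auto intro: less_le_trans)
  next
    fix a assume "T < a"
    moreover have "G2 y \<le> T" for y unfolding T_def using bdd by (auto intro: cSUP_upper)
    ultimately show "eventually (\<lambda>y. G2 y < a) at_top" by (intro always_eventually allI) (blast intro: le_less_trans)
  qed
  have ev: "eventually (\<lambda>x. G2 x = G x) at_top"
    by (intro eventually_at_top_linorderI[of R]) (auto simp: G2_def max_def)
  have GT: "(G \<longlongrightarrow> T) at_top"
    using Lim_transform_eventually[OF G2T ev] .
  have FTC: "(\<integral>\<^sup>+x. ennreal (g2 x) * indicator {R..} x \<partial>lborel) = T - G R"
    by (rule nn_integral_FTC_atLeast[OF borel_measurable_continuous_onI[OF g2c]])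
       (auto simp: g2_def max_def intro: G gpos GT)
  define M where "M = 1 / (2 * ln 2 * m 2)"
  have fM: "1 / (r * ln r * m r) \<le> M" if "r \<ge> 2" for r
  proof -
    have "2 * ln 2 * m 2 \<le> r * ln r * m r"
      using that mpos[of 2] mmono[of 2 r]
      by (intro mult_mono) auto
    moreover have "0 < 2 * ln 2 * m 2" using mpos[of 2] by simp
    ultimately show ?thesis unfolding M_def
      by (intro divide_left_mono) (auto intro: mult_pos_pos)
  qed
  have "(\<integral>\<^sup>+ r\<in>{2..}. ennreal (1 / (r * ln r * m r)) \<partial>lborel)
      \<le> (\<integral>\<^sup>+x. ennreal M * indicator {2..R} x + ennreal (g2 x) * indicator {R..} x \<partial>lborel)"
  proof (rule nn_integral_mono)
    fix x
    show "ennreal (1 / (x * ln x * m x)) * indicator {2..} x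
        \<le> ennreal M * indicator {2..R} x + ennreal (g2 x) * indicator {R..} x"
    proof (cases "x \<ge> 2")
      case False then show ?thesis by auto
    next
      case True
      show ?thesis
      proof (cases "x \<le> R")
        case True
        have "ennreal (1 / (x * ln x * m x)) \<le> ennreal M"
          using fM[of x] \<open>2 \<le> x\<close> by (intro ennreal_leI) auto
        then show ?thesis using True \<open>2 \<le> x\<close>
          by (auto simp: indicator_def intro: add_increasing2)
      next
        case False
        then show ?thesis using fg[of x] \<open>2 \<le> x\<close> by (auto simp: indicator_def g2_def max_def intro: ennreal_leI)
      qed
    qed
  qed
  also have "\<dots> = (\<integral>\<^sup>+x. ennreal M * indicator {2..R} x \<partial>lborel) + (\<integral>\<^sup>+x. ennreal (g2 x) * indicator {R..} x \<partial>lborel)"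
  proof (rule nn_integral_add)
    have "g2 \<in> borel_measurable borel" by (rule borel_measurable_continuous_onI[OF g2c])
    then show "(\<lambda>x. ennreal (g2 x) * indicator {R..} x) \<in> borel_measurable lborel"
      by measurable
  qed auto
  also have "\<dots> = ennreal M * ennreal (R - 2) + ennreal (T - G R)"
    using R by (simp add: FTC nn_integral_cmult_indicator)
  also have "\<dots> < \<infinity>" by (simp add: ennreal_mult_less_top)
  finally show ?thesis unfolding Osg_def by auto
qed


lemma osg_div:
  fixes m :: "real \<Rightarrow> real"
  assumes mpos: "\<And>x. x > 0 \<Longrightarrow> m x > 0"
    and mle: "\<And>r. r \<ge> 2 \<Longrightarrow> m r \<le> C" and C: "C > 0"
  shows "Osg m"
proof -
  define I where "I = (\<integral>\<^sup>+ r\<in>{2..}. ennreal (1 / (r * ln r * m r)) \<partial>lborel)"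
  have lb: "ennreal ((ln (ln b) - ln (ln 2)) / C) \<le> I" if b: "b \<ge> 2" for b
  proof -
    have "(\<integral>\<^sup>+x. ennreal (1 / (C * (x * ln x))) * indicator {2..b} x \<partial>lborel)
        = ln (ln b) / C - ln (ln 2) / C"
    proof (rule nn_integral_FTC_Icc)
      show "(\<lambda>x. 1 / (C * (x * ln x))) \<in> borel_measurable borel" by measurable
      fix x :: real assume x: "x \<in> {2..b}"
      then have "x > 1" by auto
      then have "ln x > 0" by auto
      show "0 \<le> 1 / (C * (x * ln x))" using C \<open>x > 1\<close> \<open>ln x > 0\<close> by auto
      show "((\<lambda>x. ln (ln x) / C) has_real_derivative 1 / (C * (x * ln x))) (at x)"
        using \<open>x > 1\<close> \<open>ln x > 0\<close> C
        by (auto intro!: derivative_eq_intros simp: field_simps)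
    qed (use b in auto)
    also have "ln (ln b) / C - ln (ln 2) / C = (ln (ln b) - ln (ln 2)) / C"
      by (simp add: diff_divide_distrib)
    finally have eq: "(\<integral>\<^sup>+x. ennreal (1 / (C * (x * ln x))) * indicator {2..b} x \<partial>lborel)
        = ennreal ((ln (ln b) - ln (ln 2)) / C)" by simp
    have "(\<integral>\<^sup>+x. ennreal (1 / (C * (x * ln x))) * indicator {2..b} x \<partial>lborel) \<le> I"
      unfolding I_def
    proof (rule nn_integral_mono)
      fix x :: real
      show "ennreal (1 / (C * (x * ln x))) * indicator {2..b} x
          \<le> ennreal (1 / (x * ln x * m x)) * indicator {2..} x"
      proof (cases "x \<in> {2..b}")
        case True
        then have "x > 1" by auto
        then have "ln x > 0" by auto
        have "m x > 0" using mpos \<open>x > 1\<close> by auto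
        have "1 / (C * (x * ln x)) \<le> 1 / (x * ln x * m x)"
          using mle[of x] True \<open>x > 1\<close> \<open>ln x > 0\<close> \<open>m x > 0\<close>
          by (intro divide_left_mono) (auto intro!: mult_pos_pos simp: mult_ac)
        then show ?thesis using True by (auto simp: indicator_def intro: ennreal_leI)
      qed auto
    qed
    then show ?thesis using eq by simp
  qed
  show ?thesis
  proof (rule ccontr)
    assume "\<not> Osg m"
    then have "I \<noteq> \<infinity>" unfolding Osg_def I_def by auto
    then obtain t where t: "I = ennreal t" "t \<ge> 0" by (cases I) auto
    define y where "y = C * t + 1 + ln (ln 2)"
    define b where "b = exp (exp y)"
    have "ln (ln 2) < y" unfolding y_def using C t by (auto intro: add_nonneg_pos)
    then have "ln 2 < exp y"
      by (metis exp_less_cancel_iff exp_ln ln_gt_zero one_less_numeral_iff semiring_norm(76))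
    then have "2 < b" unfolding b_def
      by (metis exp_less_cancel_iff exp_ln zero_less_numeral)
    have "(ln (ln b) - ln (ln 2)) / C = t + 1 / C"
      unfolding b_def y_def using C by (simp add: field_simps)
    then have "ennreal (t + 1 / C) \<le> ennreal t" using lb[of b] \<open>2 < b\<close> t by simp
    then have "t + 1 / C \<le> t" using t C by (subst (asm) ennreal_le_iff) auto
    then show False using C by simp
  qed
qed


lemma beta2_lemma:
  fixes M P P' :: "real \<Rightarrow> real" and b :: real
  assumes dM: "\<And>s. (M has_real_derivative P s) (at s)"
    and dP: "\<And>s. (P has_real_derivative P' s) (at s)"
    and Pnn: "\<And>s. P s \<ge> 0"
    and Mtop: "filterlim M at_top at_top"
    and q0: "((\<lambda>s. s * P s / M s) \<longlongrightarrow> 0) at_top"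
    and qb: "((\<lambda>s. s * P' s / P s) \<longlongrightarrow> b) at_top"
  shows "b = -1"
proof -
  have P0: "P' s = 0" if "P s = 0" for s
    by (rule DERIV_local_min[OF dP zero_less_one]) (use that Pnn in auto)
  show ?thesis
  proof (rule linorder_cases[of b "-1"])
    assume blt: "b < -1"
    define c where "c = (b - 1) / 2"
    have "b < c" "c < -1" using blt unfolding c_def by auto
    have "eventually (\<lambda>s. s * P' s / P s < c \<and> s > 0) at_top"
      using order_tendstoD(2)[OF qb \<open>b < c\<close>] eventually_gt_at_top[of 0]
      by eventually_elim auto
    then obtain S where S: "\<And>s. s \<ge> S \<Longrightarrow> s * P' s / P s < c \<and> s > 0"
      by (auto simp: eventually_at_top_linorder)
    have key: "s * P' s \<le> c * P s" if "s \<ge> S" for s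
    proof (cases "P s = 0")
      case True then show ?thesis using P0 by simp
    next
      case False
      then have "P s > 0" using Pnn[of s] by auto
      then show ?thesis using S[OF that] by (simp add: divide_less_eq)
    qed
    define d where "d = - (1 + c)"
    have "d > 0" using \<open>c < -1\<close> unfolding d_def by auto
    define H where "H s = s * P s + d * M s" for s
    have Hdec: "H s \<le> H S" if "s \<ge> S" for s
    proof (rule DERIV_nonpos_imp_nonincreasing[OF that])
      fix x assume "S \<le> x" "x \<le> s"
      have "(H has_real_derivative (P x + x * P' x + d * P x)) (at x)"
        unfolding H_def[abs_def]
        by (auto intro!: derivative_eq_intros dP dM)
      moreover have "P x + x * P' x + d * P x \<le> 0"
        using key[OF \<open>S \<le> x\<close>] unfolding d_def by (simp add: algebra_simps)
      ultimately show "\<exists>y. (H has_real_derivative y) (at x) \<and> y \<le> 0" by blast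
    qed
    have Mb: "M s \<le> H S / d" if "s \<ge> S" for s
    proof -
      have "s * P s \<ge> 0" using S[OF that] Pnn[of s] by auto
      then have "d * M s \<le> H S" using Hdec[OF that] unfolding H_def by auto
      then show ?thesis using \<open>d > 0\<close> by (simp add: field_simps)
    qed
    have "eventually (\<lambda>s. M s > H S / d) at_top"
      using Mtop by (simp add: filterlim_at_top_dense)
    moreover have "eventually (\<lambda>s. s \<ge> S) at_top" by (rule eventually_ge_at_top)
    ultimately have "eventually (\<lambda>s. M s > H S / d \<and> s \<ge> S) at_top"
      by (rule eventually_conj)
    then obtain N where N: "\<And>s. s \<ge> N \<Longrightarrow> M s > H S / d \<and> s \<ge> S"
      unfolding eventually_at_top_linorder by blast
    define s where "s = N"
    have "M s > H S / d" "s \<ge> S" using N[of N] unfolding s_def by auto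
    then show ?thesis using Mb[of s] by linarith
  next
    assume bgt: "b > -1"
    define c where "c = (b - 1) / 2"
    have "c < b" "-1 < c" using bgt unfolding c_def by auto
    have "eventually (\<lambda>s. s * P' s / P s > c \<and> s > 0) at_top"
      using order_tendstoD(1)[OF qb \<open>c < b\<close>] eventually_gt_at_top[of 0]
      by eventually_elim auto
    then obtain S where S: "\<And>s. s \<ge> S \<Longrightarrow> s * P' s / P s > c \<and> s > 0"
      by (auto simp: eventually_at_top_linorder)
    have key: "s * P' s \<ge> c * P s" if "s \<ge> S" for s
    proof (cases "P s = 0")
      case True then show ?thesis using P0 by simp
    next
      case False
      then have "P s > 0" using Pnn[of s] by auto
      then show ?thesis using S[OF that] by (simp add: less_divide_eq)
    qed
    define d where "d = 1 + c"
    have "d > 0" using \<open>-1 < c\<close> unfolding d_def by auto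
    define H where "H s = s * P s - d * M s" for s
    have Hinc: "H S \<le> H s" if "s \<ge> S" for s
    proof (rule DERIV_nonneg_imp_nondecreasing[OF that])
      fix x assume "S \<le> x" "x \<le> s"
      have "(H has_real_derivative (P x + x * P' x - d * P x)) (at x)"
        unfolding H_def[abs_def]
        by (auto intro!: derivative_eq_intros dP dM)
      moreover have "P x + x * P' x - d * P x \<ge> 0"
        using key[OF \<open>S \<le> x\<close>] unfolding d_def by (simp add: algebra_simps)
      ultimately show "\<exists>y. (H has_real_derivative y) (at x) \<and> y \<ge> 0" by blast
    qed
    have lim0: "((\<lambda>s. H S / M s) \<longlongrightarrow> 0) at_top"
      by (rule tendsto_divide_0[OF tendsto_const filterlim_at_top_imp_at_infinity[OF Mtop]])
    have e1: "eventually (\<lambda>s. H S / M s > - d / 2) at_top"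
      using order_tendstoD(1)[OF lim0, of "- d / 2"] \<open>d > 0\<close> by auto
    have e2: "eventually (\<lambda>s. s * P s / M s < d / 2) at_top"
      using order_tendstoD(2)[OF q0, of "d / 2"] \<open>d > 0\<close> by auto
    have e3: "eventually (\<lambda>s. M s > 0) at_top"
      using Mtop by (simp add: filterlim_at_top_dense)
    have "eventually (\<lambda>s. H S / M s > - d / 2 \<and> s * P s / M s < d / 2 \<and> M s > 0 \<and> s \<ge> S) at_top"
      by (intro eventually_conj e1 e2 e3 eventually_ge_at_top)
    then obtain N where N: "\<And>s. s \<ge> N \<Longrightarrow> H S / M s > - d / 2 \<and> s * P s / M s < d / 2 \<and> M s > 0 \<and> s \<ge> S"
      unfolding eventually_at_top_linorder by blast
    define s where "s = N"
    have elim: "H S / M s > - d / 2" "s * P s / M s < d / 2" "M s > 0" "s \<ge> S"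
      using N[of N] unfolding s_def by auto
    show ?thesis
    proof -
      have "d * M s + H S \<le> s * P s" using Hinc[OF elim(4)] unfolding H_def by auto
      then have "(d * M s + H S) / M s \<le> s * P s / M s" using elim(3)
        by (intro divide_right_mono) auto
      moreover have "(d * M s + H S) / M s = d + H S / M s" using elim(3)
        by (simp add: field_simps)
      ultimately have "d + H S / M s \<le> s * P s / M s" by simp
      then show ?thesis using elim by linarith
    qed
  qed simp
qed

theorem lemma2p1:
  fixes m :: "real \<Rightarrow> real" and n :: nat
  assumes "n \<ge> 1"
    and "H1 n m"
    and "(\<exists>\<beta> \<beta>1 \<beta>2. H2a m \<beta> \<beta>1 \<beta>2) \<or> H2b m \<or> H2c m"
  shows "(\<forall>\<beta> \<beta>1 \<beta>2. H2a m \<beta> \<beta>1 \<beta>2 \<longrightarrow> Osg m \<longrightarrow> \<beta> \<le> 1 \<and> \<beta>1 = 0 \<and> \<beta>2 = -1)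
       \<and> (H2b m \<longrightarrow> \<not> Osg m)
       \<and> (H2c m \<longrightarrow> Osg m)"
proof -
  have Ck: "C_k_on (n + 4) {0<..} m" and mpd: "\<forall>r>0. m r > 0 \<and> deriv m r \<ge> 0"
    using assms(2) unfolding H1_def by blast+
  have diff0: "m differentiable (at x)" if "x > 0" for x
    using Ck that unfolding C_k_on_def by (metis add_gr_0 funpow_0 greaterThan_iff zero_less_numeral)
  have diff1: "deriv m differentiable (at x)" if "x > 0" for x
  proof -
    have h: "\<forall>j<n + 4. \<forall>x\<in>{0<..}. ((deriv ^^ j) m) differentiable (at x)"
      using Ck unfolding C_k_on_def by blast
    have "(deriv ^^ 1) m differentiable (at x)"
      using spec[OF h, of 1] that by simp
    then show ?thesis by simp
  qed
  have cdm: "continuous_on {0<..} (deriv m)"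
  proof -
    have h: "\<forall>j\<le>n + 4. continuous_on {0<..} ((deriv ^^ j) m)"
      using Ck unfolding C_k_on_def by blast
    have "continuous_on {0<..} ((deriv ^^ 1) m)"
      using spec[OF h, of 1] by simp
    then show ?thesis by simp
  qed
  have dm: "(m has_real_derivative deriv m x) (at x)" if "x > 0" for x
    using diff0[OF that] DERIV_deriv_iff_real_differentiable by blast
  have ddm: "(deriv m has_real_derivative deriv (deriv m) x) (at x)" if "x > 0" for x
    using diff1[OF that] DERIV_deriv_iff_real_differentiable by blast
  have mpos: "\<And>x. x > 0 \<Longrightarrow> m x > 0" and dmnn: "\<And>x. x > 0 \<Longrightarrow> deriv m x \<ge> 0"
    using mpd by auto
  have mmono: "m x \<le> m y" if "0 < x" "x \<le> y" for x y
  proof (rule DERIV_nonneg_imp_nondecreasing[OF that(2)])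
    fix z assume "x \<le> z" "z \<le> y"
    then have "z > 0" using that by simp
    then show "\<exists>y. (m has_real_derivative y) (at z) \<and> 0 \<le> y"
      using dm[of z] dmnn[of z] by blast
  qed
  have mcont: "continuous_on {0<..} m"
    by (rule differentiable_imp_continuous_on) (auto simp: differentiable_on_def intro: differentiable_at_withinI diff0)
  have dMt: "(mtilde m has_real_derivative deriv m (exp s) * exp s) (at s)" for s
  proof -
    have "((\<lambda>s. m (exp s)) has_real_derivative deriv m (exp s) * exp s) (at s)"
      by (rule DERIV_chain2[OF dm DERIV_exp]) simp
    then show ?thesis unfolding mtilde_def[abs_def] .
  qed
  have Peq: "deriv (mtilde m) = (\<lambda>s. deriv m (exp s) * exp s)"
    using dMt by (intro ext DERIV_imp_deriv)
  have dP: "(deriv (mtilde m) has_real_derivative deriv (deriv (mtilde m)) s) (at s)" for s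
  proof -
    have d1: "((\<lambda>s. deriv m (exp s)) has_real_derivative deriv (deriv m) (exp s) * exp s) (at s)"
      by (rule DERIV_chain2[OF ddm DERIV_exp]) simp
    have "((\<lambda>s. deriv m (exp s) * exp s) has_real_derivative
        deriv (deriv m) (exp s) * exp s * exp s + exp s * deriv m (exp s)) (at s)"
      using DERIV_mult[OF d1 DERIV_exp] by simp
    then show ?thesis unfolding Peq using DERIV_imp_deriv by metis
  qed
  have mtilde_ln: "mtilde m (ln r) = m r" if "r > 0" for r
    using that by (simp add: mtilde_def)
  have P_ln: "deriv (mtilde m) (ln r) = deriv m r * r" if "r > 0" for r
    using that by (simp add: Peq)
  have e2: "exp 1 \<ge> (2::real)" using exp_ge_add_one_self[of 1] by simp
  have part1: "\<beta> \<le> 1 \<and> \<beta>1 = 0 \<and> \<beta>2 = -1" if H: "H2a m \<beta> \<beta>1 \<beta>2" and O: "Osg m" for \<beta> \<beta>1 \<beta>2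
  proof -
    have b0: "0 \<le> \<beta>" and mtop: "filterlim m at_top at_top"
      and lb: "((\<lambda>r. ereal (r * ln r * deriv (mtilde m) r / mtilde m r)) \<longlongrightarrow> \<beta>) at_top"
      and lb1: "((\<lambda>r. r * deriv (mtilde m) r / mtilde m r) \<longlongrightarrow> \<beta>1) at_top"
      and lb2: "((\<lambda>r. r * deriv (deriv (mtilde m)) r / deriv (mtilde m) r) \<longlongrightarrow> \<beta>2) at_top"
      using H unfolding H2a_def by blast+
    have ble: "\<beta> \<le> 1"
    proof (rule ccontr)
      assume "\<not> \<beta> \<le> 1"
      then have "1 < \<beta>" by simp
      then obtain c where c: "1 < ereal c" "ereal c < \<beta>" using ereal_dense2 by blast
      have "eventually (\<lambda>s. ereal c < ereal (s * ln s * deriv (mtilde m) s / mtilde m s)) at_top"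
        using order_tendstoD(1)[OF lb c(2)] .
      then have "eventually (\<lambda>s. c < s * ln s * deriv (mtilde m) s / mtilde m s) at_top" by simp
      then have "eventually (\<lambda>r. c < ln r * ln (ln r) * deriv (mtilde m) (ln r) / mtilde m (ln r)) at_top"
        using ln_at_top unfolding filterlim_iff by blast
      then obtain R0 where R0: "\<And>r. r \<ge> R0 \<Longrightarrow> c < ln r * ln (ln r) * deriv (mtilde m) (ln r) / mtilde m (ln r)"
        unfolding eventually_at_top_linorder by blast
      define R where "R = max R0 (exp 1)"
      have R2: "R \<ge> 2" using e2 unfolding R_def by linarith
      define \<epsilon> where "\<epsilon> = c - 1"
      have eps: "\<epsilon> > 0" using c(1) unfolding \<epsilon>_def by simp
      define G where "G r = - ln (ln r) / (\<epsilon> * m r)" for r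
      define g where "g r = (ln (ln r) * deriv m r - m r / (r * ln r)) / (\<epsilon> * (m r)^2)" for r
      have rR: "r > 0" "ln r \<ge> 1" "ln r > 0" "ln (ln r) \<ge> 0" "m r > 0" if "r \<ge> R" for r
      proof -
        show "r > 0" using that R2 by simp
        have "exp 1 \<le> r" using that unfolding R_def by simp
        then show "ln r \<ge> 1" using \<open>r > 0\<close> by (simp add: ln_ge_iff)
        then show "ln r > 0" by simp
        show "ln (ln r) \<ge> 0" using \<open>ln r \<ge> 1\<close> by simp
        show "m r > 0" using mpos \<open>r > 0\<close> by simp
      qed
      have "\<not> Osg m"
      proof (rule osg_fin[OF mpos mmono R2])
        fix r assume r: "r \<ge> R"
        note rr = rR[OF r]
        show "(G has_real_derivative g r) (at r)"
          unfolding G_def[abs_def] g_def using rr eps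
          by (auto intro!: derivative_eq_intros dm simp: field_simps power2_eq_square)
        show "G r \<le> 0" unfolding G_def using rr eps by (auto intro!: divide_nonpos_pos)
        have Q: "c < ln r * ln (ln r) * (deriv m r * r) / m r"
          using R0[of r] r rr unfolding R_def by (simp add: mtilde_ln P_ln)
        define A where "A = r * ln r * m r"
        have A: "A > 0" unfolding A_def using rr by simp
        have "g r = (ln r * ln (ln r) * (deriv m r * r) / m r - 1) / (\<epsilon> * A)"
          unfolding g_def A_def using rr eps by (simp add: field_simps power2_eq_square)
        moreover have "\<epsilon> / (\<epsilon> * A) \<le> (ln r * ln (ln r) * (deriv m r * r) / m r - 1) / (\<epsilon> * A)"
          using Q A eps unfolding \<epsilon>_def by (intro divide_right_mono) auto
        moreover have "\<epsilon> / (\<epsilon> * A) = 1 / (r * ln r * m r)" using eps A unfolding A_def by simp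
        ultimately show "1 / (r * ln r * m r) \<le> g r" by simp
      next
        show "continuous_on {R..} g"
          unfolding g_def
          apply (intro continuous_intros continuous_on_subset[OF cdm] continuous_on_subset[OF mcont])
          using rR eps apply (auto simp: R_def)
          by (metis less_irrefl max.bounded_iff R_def)
      qed
      then show False using O by simp
    qed
    obtain b where bb: "\<beta> = ereal b" using b0 ble by (cases \<beta>) auto
    have qb: "((\<lambda>s. s * ln s * deriv (mtilde m) s / mtilde m s) \<longlongrightarrow> b) at_top"
      using lb unfolding bb by simp
    have "((\<lambda>s. (s * ln s * deriv (mtilde m) s / mtilde m s) / ln s) \<longlongrightarrow> 0) at_top"
      by (rule tendsto_divide_0[OF qb filterlim_at_top_imp_at_infinity[OF ln_at_top]])
    moreover have "eventually (\<lambda>s. (s * ln s * deriv (mtilde m) s / mtilde m s) / ln s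
        = s * deriv (mtilde m) s / mtilde m s) at_top"
      using eventually_gt_at_top[of 1] by eventually_elim simp
    ultimately have "((\<lambda>s. s * deriv (mtilde m) s / mtilde m s) \<longlongrightarrow> 0) at_top"
      by (rule Lim_transform_eventually)
    then have b1: "\<beta>1 = 0" using lb1 tendsto_unique by (metis trivial_limit_at_top_linorder)
    have mttop: "filterlim (mtilde m) at_top at_top"
      unfolding mtilde_def[abs_def] by (rule filterlim_compose[OF mtop exp_at_top])
    have dMt2: "(mtilde m has_real_derivative deriv (mtilde m) s) (at s)" for s
      using dMt[of s] Peq by simp
    have "\<beta>2 = -1"
    proof (rule beta2_lemma[OF dMt2 dP _ mttop])
      fix s show "0 \<le> deriv (mtilde m) s" unfolding Peq using dmnn[of "exp s"] by simp
    next
      show "((\<lambda>s. s * deriv (mtilde m) s / mtilde m s) \<longlongrightarrow> 0) at_top" using lb1 b1 by simp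
    qed (rule lb2)
    then show ?thesis using ble b1 by simp
  qed
  have part2: "\<not> Osg m" if h2b: "H2b m"
  proof -
    obtain \<alpha> where a: "0 < \<alpha>" "((\<lambda>r. r * deriv m r / m r) \<longlongrightarrow> \<alpha>) at_top"
      using h2b unfolding H2b_def by blast
    define c where "c = \<alpha> / 2"
    have c: "0 < c" "c < \<alpha>" using a(1) unfolding c_def by auto
    obtain R0 where R0: "\<And>r. r \<ge> R0 \<Longrightarrow> c < r * deriv m r / m r"
      using order_tendstoD(1)[OF a(2) c(2)] unfolding eventually_at_top_linorder by blast
    define R where "R = max R0 (exp 1)"
    have R2: "R \<ge> 2" using e2 unfolding R_def by linarith
    have rR: "r > 0" "ln r \<ge> 1" "m r > 0" if "r \<ge> R" for r
    proof -
      show "r > 0" using that R2 by simp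
      have "exp 1 \<le> r" using that unfolding R_def by simp
      then show "ln r \<ge> 1" using \<open>r > 0\<close> by (simp add: ln_ge_iff)
      show "m r > 0" using mpos \<open>r > 0\<close> by simp
    qed
    define G where "G r = - 1 / (c * m r)" for r
    define g where "g r = deriv m r / (c * (m r)^2)" for r
    show ?thesis
    proof (rule osg_fin[OF mpos mmono R2])
      fix r assume r: "r \<ge> R"
      note rr = rR[OF r]
      show "(G has_real_derivative g r) (at r)"
        unfolding G_def[abs_def] g_def using rr c
        by (auto intro!: derivative_eq_intros dm simp: field_simps power2_eq_square)
      show "G r \<le> 0" unfolding G_def using rr c by simp
      have Q: "c < r * deriv m r / m r" using R0[of r] r unfolding R_def by simp
      define A where "A = r * m r"
      have A: "A > 0" unfolding A_def using rr by simp
      have "g r = (r * deriv m r / m r) / (c * A)"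
        unfolding g_def A_def using rr c by (simp add: field_simps power2_eq_square)
      moreover have "c / (c * A) \<le> (r * deriv m r / m r) / (c * A)"
        using Q A c by (intro divide_right_mono) auto
      moreover have "c / (c * A) = 1 / (r * m r)" using c A unfolding A_def by simp
      moreover have "1 / (r * ln r * m r) \<le> 1 / (r * m r)"
      proof (rule divide_left_mono)
        show "r * m r \<le> r * ln r * m r"
          using rr mult_right_mono[of 1 "ln r" "r * m r"] by (simp add: mult_ac)
        have "ln r > 0" using rr by linarith
        then show "0 < r * ln r * m r * (r * m r)" using rr by (intro mult_pos_pos) auto
      qed simp
      ultimately show "1 / (r * ln r * m r) \<le> g r" by simp
    next
      show "continuous_on {R..} g"
        unfolding g_def
        apply (intro continuous_intros continuous_on_subset[OF cdm] continuous_on_subset[OF mcont])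
        using rR c apply (auto simp: R_def)
        by (metis less_irrefl max.bounded_iff R_def)
    qed
  qed
  have part3: "Osg m" if h2c: "H2c m"
  proof -
    obtain C where C: "C > 0" "(m \<longlongrightarrow> C) at_top" using h2c unfolding H2c_def by blast
    show ?thesis
    proof (rule osg_div[OF mpos _ C(1)])
      fix r :: real assume "r \<ge> 2"
      show "m r \<le> C"
      proof (rule tendsto_lowerbound[OF C(2)])
        show "eventually (\<lambda>t. m r \<le> m t) at_top"
          using eventually_ge_at_top[of r] by eventually_elim (use \<open>r \<ge> 2\<close> mmono in auto)
      qed simp
    qed
  qed
  show ?thesis using part1 part2 part3 by blast
qed

end
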